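(* Let $\lambda\in\mathfrak h_{\mathbb R}^*$ and $J\subseteq I$, and let $\mathbf P(\lambda,J)$ be the polyhedron $$\mathbf P(\lambda,J)=\operatorname{conv}_{\mathbb R}(W_J(\lambda))-\operatorname{cone}_{\mathbb R}(\Phi^+\setminus\Phi^+_J).$$ Let $\lambda'\in W_J(\lambda)$ be the element satisfying $\lambda'(h_{\alpha_j})\ge0$ for all $j\in J$. Then $F$ is a face of $\mathbf P(\lambda,J)$ if and only if $$w(F)=\operatorname{conv}_{\mathbb R}(W_{J\cap I_0}(\lambda'))-\operatorname{cone}_{\mathbb R}(\Phi^+_{I_0}\setminus\Phi^+_{J\cap I_0})$$ for some $w\in W_J$ and $I_0\subseteq I$.
   Context: Let $\mathfrak g$ be a complex semisimple Lie algebra with Cartan subalgebra $\mathfrak h$, roots $\Phi$, simple roots $\{\alpha_i:i\in I\}$, positive roots $\Phi^+$; $\mathfrak h_{\mathbb R}^*$ is the real span of $\Phi$, with the $W$-invariant inner product induced by the Killing form; $h_\alpha$ is the coroot of $\alpha$. For $K\subseteq I$: $\Phi^+_K=\Phi^+\cap\sum_{k\in K}\mathbb Z\alpha_k$, and $W_K$ is the subgroup of the Weyl group generated by the simple reflections $s_k$, $k\in K$; $W_K(\mu)$ is the $W_K$-orbit of $\mu$. $\operatorname{conv}_{\mathbb R}$ = convex hull; $\operatorname{cone}_{\mathbb R}(S)$ = set of finite nonnegative real combinations; $A-B=\{a-b:a\in A,b\in B\}$. A face of $\mathcal P\subseteq\mathbb R^n$ is $\mathcal P$ itself or $\mathcal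 P\cap H(v,w)$ where $H(v,w)=\{u:v\cdot(u-w)=0\}$, $\mathcal P\subseteq\{u:v\cdot(u-w)\ge0\}$ and $\mathcal P\cap H(v,w)\ne\emptyset$. *)

theory Defs
  imports "HOL-Analysis.Analysis"
begin

text \<open>Abstract model of the real root system of a complex semisimple Lie algebra:
  the ambient euclidean space plays the role of h_R^* (the real span of the roots),
  its inner product the one induced by the Killing form.\<close>

definition refl :: "'a::euclidean_space \<Rightarrow> 'a \<Rightarrow> 'a" where
  "refl \<alpha> x = x - (2 * (x \<bullet> \<alpha>) / (\<alpha> \<bullet> \<alpha>)) *\<^sub>R \<alpha>"

text \<open>mu(h_alpha), evaluation of mu at the coroot of alpha.\<close>
definition coroot_eval :: "'a::euclidean_space \<Rightarrow> 'a \<Rightarrow> real" where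
  "coroot_eval \<mu> \<alpha> = 2 * (\<mu> \<bullet> \<alpha>) / (\<alpha> \<bullet> \<alpha>)"

definition root_system :: "'a::euclidean_space set \<Rightarrow> bool" where
  "root_system \<Phi> \<longleftrightarrow> finite \<Phi> \<and> 0 \<notin> \<Phi> \<and> span \<Phi> = UNIV
     \<and> (\<forall>\<alpha>\<in>\<Phi>. refl \<alpha> ` \<Phi> = \<Phi>)
     \<and> (\<forall>\<alpha>\<in>\<Phi>. \<forall>\<beta>\<in>\<Phi>. coroot_eval \<beta> \<alpha> \<in> \<int>)
     \<and> (\<forall>\<alpha>\<in>\<Phi>. \<forall>c. c *\<^sub>R \<alpha> \<in> \<Phi> \<longrightarrow> c = 1 \<or> c = -1)"

definition simple_roots :: "'a::euclidean_space set \<Rightarrow> 'i set \<Rightarrow> ('i \<Rightarrow> 'a) \<Rightarrow> bool" where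
  "simple_roots \<Phi> I s \<longleftrightarrow> finite I \<and> inj_on s I \<and> s ` I \<subseteq> \<Phi> \<and> independent (s ` I)
     \<and> (\<forall>\<beta>\<in>\<Phi>. \<exists>c. (\<forall>i\<in>I. c i \<in> \<int>) \<and> \<beta> = (\<Sum>i\<in>I. c i *\<^sub>R s i)
                    \<and> ((\<forall>i\<in>I. c i \<ge> 0) \<or> (\<forall>i\<in>I. c i \<le> 0)))"

text \<open>Phi^+_K = Phi^+ \<inter> sum_{k in K} Z alpha_k; with K = I this is Phi^+.\<close>
definition pos_roots :: "'a::euclidean_space set \<Rightarrow> 'i set \<Rightarrow> ('i \<Rightarrow> 'a) \<Rightarrow> 'i set \<Rightarrow> 'a set" where
  "pos_roots \<Phi> I s K = {\<beta>\<in>\<Phi>. \<exists>c. (\<forall>i\<in>I. c i \<in> \<int> \<and> c i \<ge> 0) \<and> (\<forall>i\<in>I-K. c i = 0)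
                                   \<and> \<beta> = (\<Sum>i\<in>I. c i *\<^sub>R s i)}"

text \<open>W_K: group generated by simple reflections s_k, k in K (reflections are involutions,
  so the monoid they generate is the group).\<close>
inductive_set weyl_group :: "('i \<Rightarrow> 'a::euclidean_space) \<Rightarrow> 'i set \<Rightarrow> ('a \<Rightarrow> 'a) set"
  for s :: "'i \<Rightarrow> 'a" and K :: "'i set" where
  weyl_id: "id \<in> weyl_group s K"
| weyl_step: "w \<in> weyl_group s K \<Longrightarrow> k \<in> K \<Longrightarrow> refl (s k) \<circ> w \<in> weyl_group s K"

definition weyl_orbit :: "('i \<Rightarrow> 'a::euclidean_space) \<Rightarrow> 'i set \<Rightarrow> 'a \<Rightarrow> 'a set" where
  "weyl_orbit s K \<mu> = (\<lambda>w. w \<mu>) ` weyl_group s K"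

definition cone_R :: "'a::euclidean_space set \<Rightarrow> 'a set" where
  "cone_R S = {x. \<exists>T c. finite T \<and> T \<subseteq> S \<and> (\<forall>t\<in>T. c t \<ge> (0::real)) \<and> x = (\<Sum>t\<in>T. c t *\<^sub>R t)}"

definition set_minus :: "'a::ab_group_add set \<Rightarrow> 'a set \<Rightarrow> 'a set" where
  "set_minus A B = {a - b | a b. a \<in> A \<and> b \<in> B}"

definition hyperplane :: "'a::euclidean_space \<Rightarrow> 'a \<Rightarrow> 'a set" where
  "hyperplane v w = {u. v \<bullet> (u - w) = 0}"

definition is_face :: "'a::euclidean_space set \<Rightarrow> 'a set \<Rightarrow> bool" where
  "is_face F P \<longleftrightarrow> F = P \<or>
     (\<exists>v w. F = P \<inter> hyperplane v w \<and> P \<subseteq> {u. v \<bullet> (u - w) \<ge> 0} \<and> P \<inter> hyperplane v w \<noteq> {})"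

definition polyP :: "'a::euclidean_space set \<Rightarrow> 'i set \<Rightarrow> ('i \<Rightarrow> 'a) \<Rightarrow> 'a \<Rightarrow> 'i set \<Rightarrow> 'a set" where
  "polyP \<Phi> I s lam J = set_minus (convex hull (weyl_orbit s J lam))
                       (cone_R (pos_roots \<Phi> I s I - pos_roots \<Phi> I s J))"

end

theory Submission
  imports Defs
begin


lemma refl_linear: "linear (refl a)"
  unfolding refl_def by (intro linearI) (auto simp: algebra_simps inner_add_left scaleR_add_left add_divide_distrib diff_divide_distrib)

lemma refl_invol: "a \<noteq> 0 \<Longrightarrow> refl a (refl a x) = x"
  unfolding refl_def by (auto simp: algebra_simps inner_diff_left)

lemma refl_inner: "a \<noteq> 0 \<Longrightarrow> refl a x \<bullet> refl a y = x \<bullet> y"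
  unfolding refl_def by (auto simp: algebra_simps inner_diff_left inner_diff_right power2_eq_square inner_commute)

lemma refl_self: "a \<noteq> 0 \<Longrightarrow> refl a a = - a"
  unfolding refl_def by (auto simp: algebra_simps scaleR_2)

lemma refl_eq: "refl a x = x - coroot_eval x a *\<^sub>R a"
  unfolding refl_def coroot_eval_def by simp

locale RS =
  fixes \<Phi> :: "'a::euclidean_space set" and I :: "'i set" and s :: "'i \<Rightarrow> 'a"
  assumes rs: "root_system \<Phi>" and sr: "simple_roots \<Phi> I s"
begin

lemma finPhi: "finite \<Phi>" and zPhi: "0 \<notin> \<Phi>" and spanPhi: "span \<Phi> = UNIV"
  and reflPhi: "\<alpha> \<in> \<Phi> \<Longrightarrow> refl \<alpha> ` \<Phi> = \<Phi>"
  and reduced: "\<alpha> \<in> \<Phi> \<Longrightarrow> c *\<^sub>R \<alpha> \<in> \<Phi> \<Longrightarrow> c = 1 \<or> c = -1"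
  and intPhi: "\<alpha> \<in> \<Phi> \<Longrightarrow> \<beta> \<in> \<Phi> \<Longrightarrow> coroot_eval \<beta> \<alpha> \<in> \<int>"
  using rs unfolding root_system_def by auto

lemma finI: "finite I" and injs: "inj_on s I" and sPhi: "s ` I \<subseteq> \<Phi>" and indep: "independent (s ` I)"
  and rootrep: "\<beta> \<in> \<Phi> \<Longrightarrow> \<exists>c. (\<forall>i\<in>I. c i \<in> \<int>) \<and> \<beta> = (\<Sum>i\<in>I. c i *\<^sub>R s i)
                    \<and> ((\<forall>i\<in>I. c i \<ge> 0) \<or> (\<forall>i\<in>I. c i \<le> 0))"
  using sr unfolding simple_roots_def by auto

lemma s_in: "i \<in> I \<Longrightarrow> s i \<in> \<Phi>" using sPhi by auto
lemma s_nz: "i \<in> I \<Longrightarrow> s i \<noteq> 0" using s_in zPhi by metis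
lemma root_nz: "\<beta> \<in> \<Phi> \<Longrightarrow> \<beta> \<noteq> 0" using zPhi by auto

lemma span_sI: "span (s ` I) = UNIV"
proof -
  have "\<Phi> \<subseteq> span (s ` I)"
  proof
    fix b assume "b \<in> \<Phi>"
    then obtain c where "b = (\<Sum>i\<in>I. c i *\<^sub>R s i)" using rootrep by blast
    then show "b \<in> span (s ` I)" by (simp only:) (rule span_sum, rule span_scale, rule span_base, simp)
  qed
  then have "span \<Phi> \<subseteq> span (s ` I)" by (simp add: span_minimal)
  then show ?thesis using spanPhi by auto
qed

lemma rep_exists: "\<exists>c. x = (\<Sum>i\<in>I. c i *\<^sub>R s i)"
proof -
  have "x \<in> span (s ` I)" using span_sI by auto
  then have "x \<in> range (\<lambda>u. \<Sum>v\<in>s ` I. u v *\<^sub>R v)" by (simp only: span_finite[OF finite_imageI[OF finI]])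
  then obtain u where u: "x = (\<Sum>v\<in>s ` I. u v *\<^sub>R v)" by (rule rangeE)
  also have "\<dots> = (\<Sum>i\<in>I. u (s i) *\<^sub>R s i)" using sum.reindex[OF injs, of "\<lambda>v. u v *\<^sub>R v"] by simp
  finally show ?thesis by (rule exI[of _ "\<lambda>i. u (s i)"])
qed

lemma rep_unique: assumes "(\<Sum>i\<in>I. c i *\<^sub>R s i) = (\<Sum>i\<in>I. d i *\<^sub>R s i)" "i \<in> I"
  shows "c i = d i"
proof -
  define e where "e v = c (inv_into I s v) - d (inv_into I s v)" for v
  have "(\<Sum>v\<in>s ` I. e v *\<^sub>R v) = (\<Sum>i\<in>I. e (s i) *\<^sub>R s i)" using sum.reindex[OF injs, of "\<lambda>v. e v *\<^sub>R v"] by simp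
  also have "\<dots> = (\<Sum>i\<in>I. (c i - d i) *\<^sub>R s i)" by (intro sum.cong) (auto simp: e_def injs)
  also have "\<dots> = 0" using assms(1) by (simp add: scaleR_diff_left sum_subtractf)
  finally have z: "(\<Sum>v\<in>s ` I. e v *\<^sub>R v) = 0" .
  have "\<forall>c. (\<Sum>v\<in>s ` I. c v *\<^sub>R v) = 0 \<longrightarrow> (\<forall>v\<in>s ` I. c v = 0)"
    using indep[unfolded independent_explicit] by (rule conjunct2)
  then have "\<forall>v\<in>s ` I. e v = 0" using z by blast
  then have "e (s i) = 0" using assms(2) by auto
  then show ?thesis by (simp add: e_def injs assms(2))
qed

definition coef :: "'a \<Rightarrow> 'i \<Rightarrow> real" where
  "coef x = (SOME c. x = (\<Sum>i\<in>I. c i *\<^sub>R s i))"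

lemma coef_rep: "x = (\<Sum>i\<in>I. coef x i *\<^sub>R s i)"
  unfolding coef_def using rep_exists by (rule someI_ex)

lemma coef_unique: assumes "x = (\<Sum>i\<in>I. c i *\<^sub>R s i)" "i \<in> I" shows "coef x i = c i"
proof -
  have "(\<Sum>i\<in>I. coef x i *\<^sub>R s i) = (\<Sum>i\<in>I. c i *\<^sub>R s i)"
    using coef_rep[of x] assms(1) by (rule subst)
  then show ?thesis using rep_unique assms(2) by blast
qed

lemma coef_add: "i \<in> I \<Longrightarrow> coef (x + y) i = coef x i + coef y i"
  by (rule coef_unique) (simp_all add: scaleR_add_left sum.distrib flip: coef_rep)

lemma coef_scale: "i \<in> I \<Longrightarrow> coef (a *\<^sub>R x) i = a * coef x i"
  by (rule coef_unique) (simp_all flip: coef_rep scaleR_scaleR scaleR_sum_right)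

lemma coef_minus: "i \<in> I \<Longrightarrow> coef (- x) i = - coef x i"
  using coef_scale[of i "-1" x] by simp

lemma coef_diff: "i \<in> I \<Longrightarrow> coef (x - y) i = coef x i - coef y i"
  using coef_add[of i x "-y"] coef_minus[of i y] by simp

lemma coef_zero: "i \<in> I \<Longrightarrow> coef 0 i = 0"
  using coef_scale[of i 0 0] by simp

lemma coef_s: assumes "j \<in> I" "i \<in> I" shows "coef (s j) i = (if i = j then 1 else 0)"
proof -
  have "(\<Sum>i\<in>I. (if i = j then 1 else 0) *\<^sub>R s i) = (\<Sum>i\<in>I. (if i = j then s i else 0))"
    by (rule sum.cong) auto
  also have "\<dots> = s j" using assms(1) finI by (simp add: sum.delta)
  finally show ?thesis by (rule coef_unique[OF sym assms(2)])
qed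

lemma coef_sum: assumes "finite A" "i \<in> I" shows "coef (\<Sum>a\<in>A. f a) i = (\<Sum>a\<in>A. coef (f a) i)"
  using assms(1)
proof (induction A rule: finite_induct)
  case empty then show ?case using coef_zero[OF assms(2)] by simp
next
  case (insert a A) then show ?case using coef_add[OF assms(2)] by simp
qed

lemma coef_eq0: "(\<forall>i\<in>I. coef x i = 0) \<Longrightarrow> x = 0"
  by (subst coef_rep) simp

lemma inner_coef: "g \<bullet> x = (\<Sum>i\<in>I. coef x i * (g \<bullet> s i))"
  by (subst coef_rep[of x]) (simp add: inner_sum_right)

definition pos :: "'a \<Rightarrow> bool" where "pos x \<longleftrightarrow> (\<forall>i\<in>I. coef x i \<ge> 0)"
definition Q :: "'i set \<Rightarrow> 'a set" where
  "Q K = {x. pos x \<and> (\<forall>i\<in>I - K. coef x i = 0)}"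

lemma root_dich: "\<beta> \<in> \<Phi> \<Longrightarrow> pos \<beta> \<or> pos (- \<beta>)"
proof -
  assume "\<beta> \<in> \<Phi>"
  then obtain c where c: "\<beta> = (\<Sum>i\<in>I. c i *\<^sub>R s i)" "(\<forall>i\<in>I. c i \<ge> 0) \<or> (\<forall>i\<in>I. c i \<le> 0)"
    using rootrep by blast
  then show ?thesis using coef_unique[OF c(1)] by (auto simp: pos_def coef_minus)
qed

lemma pos_neg_zero: assumes "pos x" "pos (- x)" shows "x = 0"
proof (rule coef_eq0, intro ballI)
  fix i assume i: "i \<in> I"
  have "coef x i \<ge> 0" "coef (-x) i \<ge> 0" using assms i by (auto simp: pos_def)
  then show "coef x i = 0" using coef_minus[OF i, of x] by linarith
qed

lemma root_not_both: "\<beta> \<in> \<Phi> \<Longrightarrow> pos \<beta> \<Longrightarrow> pos (- \<beta>) \<Longrightarrow> False"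
  using pos_neg_zero root_nz by blast

lemma Q_add: "x \<in> Q K \<Longrightarrow> y \<in> Q K \<Longrightarrow> x + y \<in> Q K"
  by (auto simp: Q_def pos_def coef_add)
lemma Q_scale: "x \<in> Q K \<Longrightarrow> a \<ge> 0 \<Longrightarrow> a *\<^sub>R x \<in> Q K"
  by (auto simp: Q_def pos_def coef_scale)
lemma Q_zero: "0 \<in> Q K"
  by (auto simp: Q_def pos_def coef_zero)

lemma pos_roots_eq: "pos_roots \<Phi> I s K = \<Phi> \<inter> Q K"
proof safe
  fix b assume "b \<in> pos_roots \<Phi> I s K"
  then obtain c where "b \<in> \<Phi>" "\<forall>i\<in>I. c i \<in> \<int> \<and> c i \<ge> 0" "\<forall>i\<in>I-K. c i = 0" "b = (\<Sum>i\<in>I. c i *\<^sub>R s i)"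
    unfolding pos_roots_def by blast
  then show "b \<in> \<Phi>" "b \<in> Q K" using coef_unique[of b c] by (auto simp: Q_def pos_def)
next
  fix b assume b: "b \<in> \<Phi>" "b \<in> Q K"
  then obtain c where c: "\<forall>i\<in>I. c i \<in> \<int>" "b = (\<Sum>i\<in>I. c i *\<^sub>R s i)" using rootrep by blast
  show "b \<in> pos_roots \<Phi> I s K" unfolding pos_roots_def
    using b c coef_unique[OF c(2)] by (auto simp: Q_def pos_def intro!: exI[of _ c])
qed

lemma coef_refl: "j \<in> I \<Longrightarrow> i \<in> I \<Longrightarrow> coef (refl (s j) x) i = coef x i - (if i = j then coroot_eval x (s j) else 0)"
proof -
  assume ji: "j \<in> I" "i \<in> I"
  have "coef (refl (s j) x) i = coef (x - coroot_eval x (s j) *\<^sub>R s j) i" by (simp only: refl_eq)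
  also have "\<dots> = coef x i - coroot_eval x (s j) * coef (s j) i" using ji by (simp only: coef_diff coef_scale)
  finally show ?thesis using ji coef_s by simp
qed

end



fun wd :: "('i \<Rightarrow> 'a::euclidean_space) \<Rightarrow> 'i list \<Rightarrow> 'a \<Rightarrow> 'a" where
  "wd s [] = id"
| "wd s (k # ks) = refl (s k) \<circ> wd s ks"

lemma wd_append: "wd s (xs @ ys) = wd s xs \<circ> wd s ys"
  by (induction xs) auto

lemma wd_linear: "linear (wd s ks)"
proof (induction ks)
  case Nil then show ?case by (simp only: wd.simps linear_id)
next
  case (Cons k ks) then show ?case by (simp only: wd.simps) (rule linear_compose[OF _ refl_linear])
qed

lemma weyl_group_wd: "weyl_group s K = {wd s ks | ks. set ks \<subseteq> K}"
proof safe
  fix w assume "w \<in> weyl_group s K"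
  then show "\<exists>ks. w = wd s ks \<and> set ks \<subseteq> K"
  proof (induction rule: weyl_group.induct)
    case weyl_id then show ?case by (intro exI[of _ "[]"]) auto
  next
    case (weyl_step w k)
    then obtain ks where "w = wd s ks" "set ks \<subseteq> K" by blast
    then show ?case using weyl_step by (intro exI[of _ "k # ks"]) auto
  qed
next
  fix ks assume "set ks \<subseteq> K"
  then show "wd s ks \<in> weyl_group s K"
    by (induction ks) (auto intro: weyl_group.intros)
qed

lemma weyl_mem: "u \<in> weyl_group s K \<longleftrightarrow> (\<exists>ks. set ks \<subseteq> K \<and> u = wd s ks)"
  by (auto simp: weyl_group_wd)

lemma wd_in: "set ks \<subseteq> K \<Longrightarrow> wd s ks \<in> weyl_group s K"
  by (auto simp: weyl_mem)

lemma weyl_comp: "u \<in> weyl_group s K \<Longrightarrow> v \<in> weyl_group s K \<Longrightarrow> u \<circ> v \<in> weyl_group s K"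
proof -
  assume "u \<in> weyl_group s K" "v \<in> weyl_group s K"
  then obtain ks ks2 where "set ks \<subseteq> K" "u = wd s ks" "set ks2 \<subseteq> K" "v = wd s ks2" by (auto simp: weyl_mem)
  then show ?thesis using wd_in[of "ks @ ks2" K s] by (simp add: wd_append)
qed

lemma weyl_mono: "K \<subseteq> L \<Longrightarrow> u \<in> weyl_group s K \<Longrightarrow> u \<in> weyl_group s L"
  by (auto simp: weyl_mem)

lemma refl_commute:
  assumes orth: "\<And>x y. u x \<bullet> u y = x \<bullet> y" and lin: "linear u"
  shows "refl (u a) (u x) = u (refl a x)"
  unfolding refl_def orth by (simp add: linear_diff[OF lin] linear_scale[OF lin])

lemma coroot_commute:
  assumes orth: "\<And>x y. u x \<bullet> u y = x \<bullet> y"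
  shows "coroot_eval (u x) (u a) = coroot_eval x a"
  unfolding coroot_eval_def orth ..

lemma discrete_ivt: "P 0 \<Longrightarrow> \<not> P n \<Longrightarrow> \<exists>i<n. P i \<and> \<not> P (Suc i)"
  by (induction n) (auto, metis less_Suc_eq)

context RS begin

lemma wd_inner: "set ks \<subseteq> I \<Longrightarrow> wd s ks x \<bullet> wd s ks y = x \<bullet> y"
  by (induction ks) (auto simp: refl_inner s_nz)

lemma wd_Phi: "set ks \<subseteq> I \<Longrightarrow> x \<in> \<Phi> \<Longrightarrow> wd s ks x \<in> \<Phi>"
  by (induction ks) (auto, metis image_eqI reflPhi s_in)

lemma wd_rev: "set ks \<subseteq> I \<Longrightarrow> wd s (rev ks) \<circ> wd s ks = id"
proof (induction ks)
  case Nil then show ?case by simp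
next
  case (Cons k ks)
  have "wd s (rev (k # ks)) \<circ> wd s (k # ks) = wd s (rev ks) \<circ> (refl (s k) \<circ> refl (s k)) \<circ> wd s ks"
    by (simp add: wd_append comp_assoc)
  also have "refl (s k) \<circ> refl (s k) = id" using Cons.prems by (auto simp: refl_invol s_nz)
  finally show ?case using Cons by simp
qed

lemma wd_rev2: "set ks \<subseteq> I \<Longrightarrow> wd s ks \<circ> wd s (rev ks) = id"
  using wd_rev[of "rev ks"] by simp

lemma wd_coef_out: "set ks \<subseteq> I \<Longrightarrow> i \<in> I \<Longrightarrow> i \<notin> set ks \<Longrightarrow> coef (wd s ks x) i = coef x i"
  by (induction ks) (auto simp: coef_refl)

lemma weyl_inner: "K \<subseteq> I \<Longrightarrow> u \<in> weyl_group s K \<Longrightarrow> u x \<bullet> u y = x \<bullet> y"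
  using wd_inner by (auto simp: weyl_mem)

lemma weyl_linear: "u \<in> weyl_group s K \<Longrightarrow> linear u"
  using wd_linear by (auto simp: weyl_mem)

lemma weyl_Phi: "K \<subseteq> I \<Longrightarrow> u \<in> weyl_group s K \<Longrightarrow> x \<in> \<Phi> \<Longrightarrow> u x \<in> \<Phi>"
  using wd_Phi by (auto simp: weyl_mem)

lemma weyl_inv: "K \<subseteq> I \<Longrightarrow> u \<in> weyl_group s K \<Longrightarrow> \<exists>u'\<in>weyl_group s K. u' \<circ> u = id \<and> u \<circ> u' = id"
proof -
  assume K: "K \<subseteq> I" "u \<in> weyl_group s K"
  then obtain ks where ks: "set ks \<subseteq> K" "u = wd s ks" by (auto simp: weyl_mem)
  have "wd s (rev ks) \<in> weyl_group s K" using ks(1) by (intro wd_in) simp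
  then show ?thesis using K ks wd_rev wd_rev2 by (intro bexI[of _ "wd s (rev ks)"] conjI) auto
qed

lemma weyl_coef_out: "K \<subseteq> I \<Longrightarrow> u \<in> weyl_group s K \<Longrightarrow> i \<in> I - K \<Longrightarrow> coef (u x) i = coef x i"
  using wd_coef_out by (fastforce simp: weyl_mem)

lemma weyl_finite: "K \<subseteq> I \<Longrightarrow> finite (weyl_group s K)"
proof -
  assume K: "K \<subseteq> I"
  let ?r = "\<lambda>u. restrict u \<Phi>"
  have "?r ` weyl_group s K \<subseteq> Pi\<^sub>E \<Phi> (\<lambda>_. \<Phi>)"
    using weyl_Phi[OF K] by auto
  then have fin: "finite (?r ` weyl_group s K)"
    by (rule finite_subset) (simp add: finite_PiE finPhi)
  have "inj_on ?r (weyl_group s K)"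
  proof (rule inj_onI)
    fix u v assume uv: "u \<in> weyl_group s K" "v \<in> weyl_group s K" "?r u = ?r v"
    have "\<forall>x\<in>\<Phi>. u x = v x" using uv(3) by (metis restrict_apply')
    then have "\<forall>x\<in>span \<Phi>. u x = v x"
      using linear_eq_on_span[OF weyl_linear[OF uv(1)] weyl_linear[OF uv(2)]] by blast
    then show "u = v" using spanPhi by auto
  qed
  then show ?thesis using fin finite_imageD by blast
qed

lemma lemma1:
  assumes g: "\<gamma> \<in> \<Phi>" "pos \<gamma>" and j: "j \<in> I" and n: "pos (- refl (s j) \<gamma>)"
  shows "\<gamma> = s j"
proof -
  have z: "coef \<gamma> i = 0" if "i \<in> I" "i \<noteq> j" for i
  proof -
    have "coef (- refl (s j) \<gamma>) i \<ge> 0" using n that by (auto simp: pos_def)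
    then have "coef \<gamma> i \<le> 0" using that j by (simp add: coef_minus coef_refl)
    moreover have "coef \<gamma> i \<ge> 0" using g that by (auto simp: pos_def)
    ultimately show ?thesis by linarith
  qed
  have "\<gamma> = (\<Sum>i\<in>I. coef \<gamma> i *\<^sub>R s i)" by (rule coef_rep)
  also have "\<dots> = (\<Sum>i\<in>I. (if i = j then coef \<gamma> j *\<^sub>R s j else 0))"
    by (rule sum.cong) (auto simp: z)
  also have "\<dots> = coef \<gamma> j *\<^sub>R s j" using j finI by (simp add: sum.delta)
  finally have ge: "\<gamma> = coef \<gamma> j *\<^sub>R s j" .
  then have "coef \<gamma> j = 1 \<or> coef \<gamma> j = -1" using reduced[OF s_in[OF j]] g(1) by metis
  moreover have "coef \<gamma> j \<ge> 0" using g j by (auto simp: pos_def)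
  ultimately show ?thesis using ge by auto
qed

lemma pos_s: "j \<in> I \<Longrightarrow> pos (s j)"
  by (auto simp: pos_def coef_s)

lemma root_pos_or_neg: "\<beta> \<in> \<Phi> \<Longrightarrow> \<not> pos (- \<beta>) \<Longrightarrow> pos \<beta>"
  using root_dich by blast

definition len :: "'i set \<Rightarrow> ('a \<Rightarrow> 'a) \<Rightarrow> nat" where
  "len K u = (LEAST n. \<exists>ks. set ks \<subseteq> K \<and> length ks = n \<and> wd s ks = u)"

lemma min_word:
  assumes "u \<in> weyl_group s K"
  obtains ks where "set ks \<subseteq> K" "wd s ks = u" "length ks = len K u"
    "\<And>ks'. set ks' \<subseteq> K \<Longrightarrow> wd s ks' = u \<Longrightarrow> length ks \<le> length ks'"
proof -
  have ex: "\<exists>n ks. set ks \<subseteq> K \<and> length ks = n \<and> wd s ks = u" using assms by (auto simp: weyl_mem)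
  then have "\<exists>ks. set ks \<subseteq> K \<and> length ks = len K u \<and> wd s ks = u"
    unfolding len_def by (rule LeastI_ex)
  then obtain ks where ks: "set ks \<subseteq> K" "length ks = len K u" "wd s ks = u" by blast
  have "length ks \<le> length ks'" if "set ks' \<subseteq> K" "wd s ks' = u" for ks'
    using that ks(2) unfolding len_def by (metis (mono_tags, lifting) Least_le)
  then show ?thesis using that ks by blast
qed

lemma min_word_neg:
  assumes K: "K \<subseteq> I" and ks: "set (xs @ [j]) \<subseteq> K"
    and mn: "\<And>ks'. set ks' \<subseteq> K \<Longrightarrow> wd s ks' = wd s (xs @ [j]) \<Longrightarrow> length (xs @ [j]) \<le> length ks'"
  shows "pos (- wd s (xs @ [j]) (s j))"
proof (rule ccontr)
  assume np: "\<not> pos (- wd s (xs @ [j]) (s j))"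
  have jI: "j \<in> I" and xsI: "set xs \<subseteq> I" using ks K by auto
  let ?v = "wd s xs"
  have "wd s (xs @ [j]) (s j) = ?v (refl (s j) (s j))" by (simp add: wd_append)
  also have "\<dots> = - ?v (s j)" using refl_self[OF s_nz[OF jI]] linear_neg[OF wd_linear] by simp
  finally have e1: "wd s (xs @ [j]) (s j) = - ?v (s j)" .
  have "wd s (xs @ [j]) (s j) \<in> \<Phi>" by (rule wd_Phi) (use ks K s_in[OF jI] in auto)
  then have "pos (wd s (xs @ [j]) (s j))" using np root_dich by blast
  then have neg0: "pos (- ?v (s j))" using e1 by simp
  define \<gamma> where "\<gamma> n = wd s (drop n xs) (s j)" for n
  have gPhi: "\<gamma> n \<in> \<Phi>" for n unfolding \<gamma>_def
    using xsI s_in[OF jI] by (intro wd_Phi) (auto dest: in_set_dropD)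
  have "\<gamma> (length xs) = s j" by (simp add: \<gamma>_def)
  then have "\<not> pos (- \<gamma> (length xs))"
  proof -
    assume e: "\<gamma> (length xs) = s j"
    show ?thesis unfolding e using root_not_both[OF s_in[OF jI] pos_s[OF jI]] by blast
  qed
  moreover have "pos (- \<gamma> 0)" using neg0 by (simp add: \<gamma>_def)
  ultimately obtain n where n: "n < length xs" "pos (- \<gamma> n)" "\<not> pos (- \<gamma> (Suc n))"
    using discrete_ivt[of "\<lambda>n. pos (- \<gamma> n)"] by blast
  let ?k = "xs ! n"
  have kI: "?k \<in> I" using n(1) xsI by auto
  have dr: "drop n xs = ?k # drop (Suc n) xs" using n(1) by (simp add: Cons_nth_drop_Suc)
  let ?y = "wd s (drop (Suc n) xs)"
  have yI: "set (drop (Suc n) xs) \<subseteq> I" using xsI by (auto dest: in_set_dropD)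
  have gn: "\<gamma> n = refl (s ?k) (\<gamma> (Suc n))" unfolding \<gamma>_def by (subst dr) simp
  have ps: "pos (\<gamma> (Suc n))" by (rule root_pos_or_neg[OF gPhi n(3)])
  have "\<gamma> (Suc n) = s ?k"
    using lemma1[OF gPhi ps kI] n(2) gn by simp
  then have ysj: "?y (s j) = s ?k" by (simp add: \<gamma>_def)
  have comm: "refl (s ?k) \<circ> ?y = ?y \<circ> refl (s j)"
  proof
    fix x show "(refl (s ?k) \<circ> ?y) x = (?y \<circ> refl (s j)) x"
      using refl_commute[of ?y "s j" x, OF wd_inner[OF yI] wd_linear] ysj by simp
  qed
  have "wd s xs = wd s (take n xs) \<circ> wd s (drop n xs)" by (metis append_take_drop_id wd_append)
  then have "wd s (xs @ [j]) = wd s (take n xs) \<circ> wd s (drop n xs) \<circ> refl (s j)"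
    by (simp add: wd_append)
  also have "\<dots> = wd s (take n xs) \<circ> (refl (s ?k) \<circ> ?y) \<circ> refl (s j)"
    by (subst dr) simp
  also have "\<dots> = wd s (take n xs) \<circ> ?y \<circ> (refl (s j) \<circ> refl (s j))"
    by (simp add: comm comp_assoc)
  also have "refl (s j) \<circ> refl (s j) = id" by (auto simp: refl_invol s_nz[OF jI])
  finally have "wd s (xs @ [j]) = wd s (take n xs @ drop (Suc n) xs)" by (simp add: wd_append o_def)
  moreover have "set (take n xs @ drop (Suc n) xs) \<subseteq> K" using ks
    by (auto dest: in_set_takeD in_set_dropD)
  ultimately have "length (xs @ [j]) \<le> length (take n xs @ drop (Suc n) xs)" using mn by metis
  then show False using n(1) by simp
qed

end



context RS begin

lemma ss_pos: "j \<in> I \<Longrightarrow> s j \<bullet> s j > 0"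
  using s_nz by auto

lemma coroot_sign: assumes "j \<in> I" shows "coroot_eval x (s j) \<ge> 0 \<longleftrightarrow> x \<bullet> s j \<ge> 0"
proof -
  have p: "s j \<bullet> s j > 0" using ss_pos[OF assms] .
  show ?thesis unfolding coroot_eval_def using p by (simp add: le_divide_eq)
qed

lemma coroot_sign_lt: "j \<in> I \<Longrightarrow> coroot_eval x (s j) < 0 \<longleftrightarrow> x \<bullet> s j < 0"
  using coroot_sign[of j x] by (simp add: not_le[symmetric])

lemma min_word_ex: assumes "u \<in> weyl_group s K"
  shows "\<exists>ks. set ks \<subseteq> K \<and> wd s ks = u \<and> length ks = len K u \<and>
     (\<forall>ks'. set ks' \<subseteq> K \<and> wd s ks' = u \<longrightarrow> length ks \<le> length ks')"
proof (rule min_word[OF assms(1)])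
  fix ks assume "set ks \<subseteq> K" "wd s ks = u" "length ks = len K u"
    "\<And>ks'. set ks' \<subseteq> K \<Longrightarrow> wd s ks' = u \<Longrightarrow> length ks \<le> length ks'"
  then show ?thesis by blast
qed

lemma len_zero: assumes "u \<in> weyl_group s K" "len K u = 0" shows "u = id"
proof -
  obtain ks where "set ks \<subseteq> K" "wd s ks = u" "length ks = len K u"
    using min_word_ex[OF assms(1)] by blast
  then show ?thesis using assms by simp
qed

lemma len_le: "set ks \<subseteq> K \<Longrightarrow> len K (wd s ks) \<le> length ks"
  unfolding len_def by (rule Least_le) blast

lemma descent:
  assumes K: "K \<subseteq> I" and u: "u \<in> weyl_group s K" and l: "len K u > 0"
  obtains v j where "v \<in> weyl_group s K" "len K v < len K u" "j \<in> K" "u = v \<circ> refl (s j)"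
    "pos (v (s j))" "v (s j) \<in> \<Phi>" "v (s j) \<in> Q K"
proof -
  obtain ks where ks: "set ks \<subseteq> K" "wd s ks = u" "length ks = len K u"
    "\<forall>ks'. set ks' \<subseteq> K \<and> wd s ks' = u \<longrightarrow> length ks \<le> length ks'"
    using min_word_ex[OF u] by blast
  then have "ks \<noteq> []" using l by auto
  then obtain xs j where xs: "ks = xs @ [j]" by (metis rev_exhaust)
  have jK: "j \<in> K" and jI: "j \<in> I" and xsK: "set xs \<subseteq> K" using ks xs K by auto
  let ?v = "wd s xs"
  have vK: "?v \<in> weyl_group s K" using xsK by (rule wd_in)
  have lv: "len K ?v < len K u" using len_le[OF xsK] ks(3) xs by simp
  have uv: "u = ?v \<circ> refl (s j)" using ks(2) xs by (simp add: wd_append)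
  have np: "pos (- wd s (xs @ [j]) (s j))"
    by (rule min_word_neg[OF K]) (use ks xs in blast)+
  have "wd s (xs @ [j]) (s j) = - ?v (s j)"
    using refl_self[OF s_nz[OF jI]] linear_neg[OF wd_linear] by (simp add: wd_append)
  then have pv: "pos (?v (s j))" using np by simp
  have vP: "?v (s j) \<in> \<Phi>" using xsK K s_in[OF jI] by (intro wd_Phi) auto
  have "?v (s j) \<in> Q K" unfolding Q_def
  proof (intro CollectI conjI ballI pv)
    fix i assume i: "i \<in> I - K"
    then have "coef (?v (s j)) i = coef (s j) i" using weyl_coef_out[OF K vK] by blast
    then show "coef (?v (s j)) i = 0" using coef_s[OF jI] i jK by auto
  qed
  then show ?thesis by (rule that[OF vK lv jK uv pv vP])
qed

lemma Q_inner_nonneg: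
  assumes "x \<in> Q K" "\<forall>k\<in>K. g \<bullet> s k \<ge> 0" shows "g \<bullet> x \<ge> 0"
proof -
  have e: "g \<bullet> x = (\<Sum>i\<in>I. coef x i * (g \<bullet> s i))" by (rule inner_coef)
  show ?thesis unfolding e
proof (rule sum_nonneg)
  fix i assume i: "i \<in> I"
  show "coef x i * (g \<bullet> s i) \<ge> 0"
  proof (cases "i \<in> K")
    case True
    then have "coef x i \<ge> 0" "g \<bullet> s i \<ge> 0" using assms i unfolding Q_def pos_def by blast+
    then show ?thesis by (rule mult_nonneg_nonneg)
  next
    case False then have "coef x i = 0" using assms i unfolding Q_def by blast
    then show ?thesis by simp
  qed
qed
qed

lemma Q_inner_zero:
  assumes "x \<in> Q K" "\<forall>k\<in>K. g \<bullet> s k \<ge> 0" "g \<bullet> x = 0"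
  shows "x \<in> Q {k\<in>K. g \<bullet> s k = 0}"
proof -
  have nn: "\<forall>i\<in>I. coef x i * (g \<bullet> s i) \<ge> 0"
  proof
    fix i assume i: "i \<in> I"
    show "coef x i * (g \<bullet> s i) \<ge> 0"
    proof (cases "i \<in> K")
      case True
      then have "coef x i \<ge> 0" "g \<bullet> s i \<ge> 0" using assms i unfolding Q_def pos_def by blast+
      then show ?thesis by (rule mult_nonneg_nonneg)
    next
      case False then have "coef x i = 0" using assms i unfolding Q_def by blast
      then show ?thesis by simp
    qed
  qed
  have z0: "(\<Sum>i\<in>I. coef x i * (g \<bullet> s i)) = 0" using assms(3) inner_coef[of g x] by linarith
  have z: "\<forall>i\<in>I. coef x i * (g \<bullet> s i) = 0"
    using sum_nonneg_eq_0_iff[OF finI, of "\<lambda>i. coef x i * (g \<bullet> s i)"] nn z0 by blast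
  show ?thesis unfolding Q_def
  proof (intro CollectI conjI ballI)
    show "pos x" using assms(1) unfolding Q_def by blast
    fix i assume i: "i \<in> I - {k\<in>K. g \<bullet> s k = 0}"
    show "coef x i = 0"
    proof (cases "i \<in> K")
      case True then have "g \<bullet> s i \<noteq> 0" using i by blast
      moreover have "coef x i * (g \<bullet> s i) = 0" using z i by blast
      ultimately show ?thesis by simp
    next
      case False then show ?thesis using assms(1) i unfolding Q_def by blast
    qed
  qed
qed

theorem H1:
  assumes K: "K \<subseteq> I" and dom: "\<forall>k\<in>K. coroot_eval lam (s k) \<ge> 0" and u: "u \<in> weyl_group s K"
  shows "lam - u lam \<in> Q K"
  using u
proof (induction "len K u" arbitrary: u rule: less_induct)
  case less
  show ?case
  proof (cases "len K u = 0")
    case True then show ?thesis using len_zero[OF less.prems] Q_zero by simp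
  next
    case False
    then obtain v j where v: "v \<in> weyl_group s K" "len K v < len K u" "j \<in> K" "u = v \<circ> refl (s j)"
      "pos (v (s j))" "v (s j) \<in> \<Phi>" "v (s j) \<in> Q K"
      using descent[OF K less.prems] by blast
    let ?c = "coroot_eval lam (s j)"
    have "u lam = v (lam - ?c *\<^sub>R s j)" using v(4) by (simp add: refl_eq)
    also have "\<dots> = v lam - ?c *\<^sub>R v (s j)" using weyl_linear[OF v(1)] by (simp add: linear_diff linear_scale)
    finally have e: "lam - u lam = (lam - v lam) + ?c *\<^sub>R v (s j)" by simp
    have a: "lam - v lam \<in> Q K" using less.hyps[OF v(2) v(1)] .
    have b: "?c *\<^sub>R v (s j) \<in> Q K" using v(3,7) dom by (intro Q_scale) auto
    show ?thesis unfolding e by (rule Q_add[OF a b])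
  qed
qed

definition ht :: "'a \<Rightarrow> real" where "ht x = (\<Sum>i\<in>I. coef x i)"

lemma root_conj:
  assumes L: "L \<subseteq> I" and g: "\<gamma> \<in> \<Phi>" "\<gamma> \<in> Q L"
  shows "\<exists>x\<in>weyl_group s L. \<exists>k\<in>L. \<gamma> = x (s k)"
  using g
proof (induction "card {\<beta>\<in>\<Phi>. ht \<beta> < ht \<gamma>}" arbitrary: \<gamma> rule: less_induct)
  case less
  show ?case
  proof (cases "\<exists>k\<in>L. \<gamma> = s k")
    case True
    then obtain k where "k \<in> L" "\<gamma> = s k" by blast
    then show ?thesis using weyl_id[of s L] by (intro bexI[of _ id]) auto
  next
    case False
    have "\<gamma> \<bullet> \<gamma> > 0" using root_nz[OF less.prems(1)] by auto
    then have "(\<Sum>i\<in>I. coef \<gamma> i * (\<gamma> \<bullet> s i)) > 0" using inner_coef[of \<gamma> \<gamma>] by linarith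
    have "\<not> (\<forall>i\<in>I. coef \<gamma> i * (\<gamma> \<bullet> s i) \<le> 0)"
    proof
      assume "\<forall>i\<in>I. coef \<gamma> i * (\<gamma> \<bullet> s i) \<le> 0"
      then have "(\<Sum>i\<in>I. coef \<gamma> i * (\<gamma> \<bullet> s i)) \<le> 0" by (intro sum_nonpos) blast
      with \<open>(\<Sum>i\<in>I. coef \<gamma> i * (\<gamma> \<bullet> s i)) > 0\<close> show False by linarith
    qed
    then obtain i where i: "i \<in> I" "coef \<gamma> i * (\<gamma> \<bullet> s i) > 0" by (auto simp: not_le)
    have ci: "coef \<gamma> i \<ge> 0" using less.prems(2) i(1) by (auto simp: Q_def pos_def)
    then have ci': "coef \<gamma> i > 0" and gi: "\<gamma> \<bullet> s i > 0" using i(2)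
      by (auto simp: zero_less_mult_iff)
    have iL: "i \<in> L"
    proof (rule ccontr)
      assume "i \<notin> L"
      then have "coef \<gamma> i = 0" using less.prems(2) i(1) unfolding Q_def by blast
      with ci' show False by simp
    qed
    let ?c = "coroot_eval \<gamma> (s i)"
    have c: "?c > 0" using gi ss_pos[OF i(1)] by (simp add: coroot_eval_def)
    define \<gamma>' where "\<gamma>' = refl (s i) \<gamma>"
    have gP: "\<gamma>' \<in> \<Phi>" unfolding \<gamma>'_def using reflPhi[OF s_in[OF i(1)]] less.prems(1) by blast
    have "\<not> pos (- \<gamma>')" using lemma1[OF less.prems(1) _ i(1)] less.prems(2) False iL
      unfolding \<gamma>'_def Q_def by blast
    then have pg: "pos \<gamma>'" using root_pos_or_neg[OF gP] by blast
    have cg: "coef \<gamma>' k = coef \<gamma> k - (if k = i then ?c else 0)" if "k \<in> I" for k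
      unfolding \<gamma>'_def using coef_refl[OF i(1) that] .
    have gQ: "\<gamma>' \<in> Q L" using pg less.prems(2) iL cg unfolding Q_def by auto
    have "ht \<gamma>' = (\<Sum>k\<in>I. coef \<gamma> k - (if k = i then ?c else 0))" unfolding ht_def by (rule sum.cong) (auto simp: cg)
    also have "\<dots> = ht \<gamma> - ?c" unfolding ht_def using finI i(1) by (simp add: sum_subtractf)
    finally have hlt: "ht \<gamma>' < ht \<gamma>" using c by simp
    have "{\<beta>\<in>\<Phi>. ht \<beta> < ht \<gamma>'} \<subset> {\<beta>\<in>\<Phi>. ht \<beta> < ht \<gamma>}" using hlt gP by auto
    then have "card {\<beta>\<in>\<Phi>. ht \<beta> < ht \<gamma>'} < card {\<beta>\<in>\<Phi>. ht \<beta> < ht \<gamma>}"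
      by (rule psubset_card_mono[rotated]) (simp add: finPhi)
    then obtain x k where xk: "x \<in> weyl_group s L" "k \<in> L" "\<gamma>' = x (s k)"
      using less.hyps gP gQ by blast
    have "\<gamma> = refl (s i) \<gamma>'" unfolding \<gamma>'_def using refl_invol[OF s_nz[OF i(1)]] by simp
    then have "\<gamma> = (refl (s i) \<circ> x) (s k)" using xk by simp
    moreover have "refl (s i) \<circ> x \<in> weyl_group s L"
      using weyl_step[OF xk(1) iL] .
    ultimately show ?thesis using xk(2) by blast
  qed
qed

lemma refl_in_weyl:
  assumes L: "L \<subseteq> I" and g: "\<gamma> \<in> \<Phi>" "\<gamma> \<in> Q L"
  shows "refl \<gamma> \<in> weyl_group s L"
proof -
  obtain x k where xk: "x \<in> weyl_group s L" "k \<in> L" "\<gamma> = x (s k)" using root_conj[OF assms] by blast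
  obtain x' where x': "x' \<in> weyl_group s L" "x' \<circ> x = id" "x \<circ> x' = id" using weyl_inv[OF L xk(1)] by blast
  have comm: "refl \<gamma> \<circ> x = x \<circ> refl (s k)"
  proof
    fix y show "(refl \<gamma> \<circ> x) y = (x \<circ> refl (s k)) y"
      using refl_commute[of x "s k" y, OF weyl_inner[OF L xk(1)] weyl_linear[OF xk(1)]] xk(3) by simp
  qed
  have "refl \<gamma> = refl \<gamma> \<circ> (x \<circ> x')" using x'(3) by simp
  also have "\<dots> = x \<circ> refl (s k) \<circ> x'" by (simp only: comp_assoc[symmetric] comm)
  finally show ?thesis
    using weyl_comp[OF weyl_comp[OF xk(1) weyl_step[OF weyl_id xk(2)]] x'(1)] by simp
qed

theorem H2:
  assumes K: "K \<subseteq> I" and dom: "\<forall>k\<in>K. coroot_eval lam (s k) \<ge> 0"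
    and gd: "\<forall>k\<in>K. g \<bullet> s k \<ge> 0" and u: "u \<in> weyl_group s K"
    and z: "g \<bullet> (lam - u lam) = 0"
  shows "u lam \<in> weyl_orbit s {k\<in>K. g \<bullet> s k = 0} lam"
  using u z
proof (induction "len K u" arbitrary: u rule: less_induct)
  case less
  let ?L = "{k\<in>K. g \<bullet> s k = 0}"
  have LI: "?L \<subseteq> I" using K by auto
  show ?case
  proof (cases "len K u = 0")
    case True
    then have "u = id" using len_zero[OF less.prems(1)] by blast
    then have "u lam = (\<lambda>w. w lam) id" by simp
    then show ?thesis using weyl_id[of s ?L] unfolding weyl_orbit_def by (rule image_eqI)
  next
    case False
    then obtain v j where v: "v \<in> weyl_group s K" "len K v < len K u" "j \<in> K" "u = v \<circ> refl (s j)"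
      "pos (v (s j))" "v (s j) \<in> \<Phi>" "v (s j) \<in> Q K"
      using descent[OF K less.prems(1)] by blast
    let ?c = "coroot_eval lam (s j)"
    let ?g = "v (s j)"
    have "u lam = v (lam - ?c *\<^sub>R s j)" using v(4) by (simp add: refl_eq)
    also have "\<dots> = v lam - ?c *\<^sub>R ?g" using weyl_linear[OF v(1)] by (simp add: linear_diff linear_scale)
    finally have ul: "u lam = v lam - ?c *\<^sub>R ?g" .
    have "g \<bullet> (lam - u lam) = g \<bullet> (lam - v lam) + ?c * (g \<bullet> ?g)"
      unfolding ul by (simp add: algebra_simps inner_diff_right)
    moreover have a: "g \<bullet> (lam - v lam) \<ge> 0" using Q_inner_nonneg[OF H1[OF K dom v(1)] gd] .
    moreover have b: "?c * (g \<bullet> ?g) \<ge> 0" using dom v(3) Q_inner_nonneg[OF v(7) gd] by simp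
    ultimately have z1: "g \<bullet> (lam - v lam) = 0" and z2: "?c * (g \<bullet> ?g) = 0" using less.prems(2) by linarith+
    obtain x where x: "x \<in> weyl_group s ?L" "v lam = x lam"
      using less.hyps[OF v(2) v(1) z1] unfolding weyl_orbit_def by blast
    show ?thesis
    proof (cases "?c = 0")
      case True then show ?thesis using ul x unfolding weyl_orbit_def by auto
    next
      case False
      then have "g \<bullet> ?g = 0" using z2 by simp
      then have gQ: "?g \<in> Q ?L" using Q_inner_zero[OF v(7) gd] by simp
      have rw: "refl ?g \<in> weyl_group s ?L" by (rule refl_in_weyl[OF LI v(6) gQ])
      have "refl ?g (v lam) = v (refl (s j) lam)"
        by (rule refl_commute[OF weyl_inner[OF K v(1)] weyl_linear[OF v(1)]])
      then have "u lam = (refl ?g \<circ> x) lam" using v(4) x(2) by simp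
      then show ?thesis using weyl_comp[OF rw x(1)] unfolding weyl_orbit_def by blast
    qed
  qed
qed

end



lemma cone_R_fin:
  fixes S :: "'a::euclidean_space set"
  assumes "finite S"
  shows "cone_R S = {x. \<exists>c. (\<forall>t\<in>S. c t \<ge> (0::real)) \<and> x = (\<Sum>t\<in>S. c t *\<^sub>R t)}"
proof safe
  fix x assume "x \<in> cone_R S"
  then obtain T c where T: "finite T" "T \<subseteq> S" "\<forall>t\<in>T. c t \<ge> (0::real)" "x = (\<Sum>t\<in>T. c t *\<^sub>R t)"
    unfolding cone_R_def by blast
  define d where "d t = (if t \<in> T then c t else 0)" for t
  have "(\<Sum>t\<in>S. d t *\<^sub>R t) = (\<Sum>t\<in>T. d t *\<^sub>R t)"
    by (rule sum.mono_neutral_right[OF assms T(2)]) (auto simp: d_def)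
  also have "\<dots> = x" using T(4) by (simp add: d_def)
  finally show "\<exists>c. (\<forall>t\<in>S. c t \<ge> (0::real)) \<and> x = (\<Sum>t\<in>S. c t *\<^sub>R t)"
    using T(3) by (intro exI[of _ d]) (auto simp: d_def)
next
  fix x and c :: "'a \<Rightarrow> real" assume "\<forall>t\<in>S. 0 \<le> c t"
  then show "(\<Sum>t\<in>S. c t *\<^sub>R t) \<in> cone_R S" unfolding cone_R_def using assms by blast
qed

lemma cone_R_mono: "A \<subseteq> B \<Longrightarrow> cone_R A \<subseteq> cone_R B"
  unfolding cone_R_def by blast

lemma cone_R_zero: "0 \<in> cone_R S"
  unfolding cone_R_def by (rule CollectI, rule exI[of _ "{}"]) auto

lemma cone_R_nonneg:
  assumes "finite R" "\<forall>r\<in>R. g \<bullet> r \<ge> 0" "c \<in> cone_R R"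
  shows "g \<bullet> c \<ge> 0"
proof -
  obtain d where d: "\<forall>t\<in>R. d t \<ge> 0" "c = (\<Sum>t\<in>R. d t *\<^sub>R t)" using assms(3) cone_R_fin[OF assms(1)] by blast
  have "g \<bullet> c = (\<Sum>t\<in>R. d t * (g \<bullet> t))" unfolding d(2) by (simp add: inner_sum_right)
  also have "\<dots> \<ge> 0" using d(1) assms(2) by (intro sum_nonneg mult_nonneg_nonneg) auto
  finally show ?thesis .
qed

lemma cone_R_add:
  assumes "finite R" "c \<in> cone_R R" "r \<in> R" "t \<ge> 0"
  shows "c + t *\<^sub>R r \<in> cone_R R"
proof -
  obtain d where d: "\<forall>t\<in>R. d t \<ge> 0" "c = (\<Sum>t\<in>R. d t *\<^sub>R t)" using assms(2) cone_R_fin[OF assms(1)] by blast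
  define e where "e x = d x + (if x = r then t else 0)" for x
  have "(\<Sum>x\<in>R. e x *\<^sub>R x) = c + (\<Sum>x\<in>R. (if x = r then t else 0) *\<^sub>R x)"
    unfolding e_def d(2) by (simp add: scaleR_add_left sum.distrib)
  also have "(\<Sum>x\<in>R. (if x = r then t else 0) *\<^sub>R x) = (\<Sum>x\<in>R. (if x = r then t *\<^sub>R r else 0))"
    by (rule sum.cong) auto
  also have "\<dots> = t *\<^sub>R r" using assms(1,3) by (simp add: sum.delta)
  finally show ?thesis using cone_R_fin[OF assms(1)] d(1) assms(4) unfolding e_def
    by (auto intro!: exI[of _ e] simp: e_def)
qed

lemma hull_le:
  assumes "finite V" "\<forall>v\<in>V. g \<bullet> v \<le> m" "a \<in> convex hull V"
  shows "g \<bullet> a \<le> m"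
proof -
  obtain u where u: "\<forall>x\<in>V. 0 \<le> u x" "sum u V = 1" "(\<Sum>x\<in>V. u x *\<^sub>R x) = a"
    using assms(3) convex_hull_finite[OF assms(1)] by blast
  have "g \<bullet> a = (\<Sum>x\<in>V. u x * (g \<bullet> x))" unfolding u(3)[symmetric] by (simp add: inner_sum_right)
  also have "\<dots> \<le> (\<Sum>x\<in>V. u x * m)" using u(1) assms(2) by (intro sum_mono mult_left_mono) auto
  also have "\<dots> = m" using u(2) by (simp add: sum_distrib_right[symmetric])
  finally show ?thesis .
qed

lemma hull_eq:
  assumes "finite V" "\<forall>v\<in>V. g \<bullet> v \<le> m" "a \<in> convex hull V" "g \<bullet> a = m"
  shows "a \<in> convex hull {v\<in>V. g \<bullet> v = m}"
proof -
  obtain u where u: "\<forall>x\<in>V. 0 \<le> u x" "sum u V = 1" "(\<Sum>x\<in>V. u x *\<^sub>R x) = a"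
    using assms(3) convex_hull_finite[OF assms(1)] by blast
  have "g \<bullet> a = (\<Sum>x\<in>V. u x * (g \<bullet> x))" unfolding u(3)[symmetric] by (simp add: inner_sum_right)
  then have "(\<Sum>x\<in>V. u x * (m - g \<bullet> x)) = 0" using u(2) assms(4)
    by (simp add: right_diff_distrib sum_subtractf sum_distrib_right[symmetric])
  moreover have "\<forall>x\<in>V. u x * (m - g \<bullet> x) \<ge> 0" using u(1) assms(2) by auto
  ultimately have z: "\<forall>x\<in>V. u x * (m - g \<bullet> x) = 0"
    using sum_nonneg_eq_0_iff[OF assms(1), of "\<lambda>x. u x * (m - g \<bullet> x)"] by blast
  let ?W = "{v\<in>V. g \<bullet> v = m}"
  have fW: "finite ?W" using assms(1) by simp
  have zero: "u x = 0" if "x \<in> V" "x \<notin> ?W" for x using z that by auto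
  have "sum u ?W = sum u V" by (rule sum.mono_neutral_left[OF assms(1)]) (auto simp: zero)
  moreover have "(\<Sum>x\<in>?W. u x *\<^sub>R x) = (\<Sum>x\<in>V. u x *\<^sub>R x)"
    by (rule sum.mono_neutral_left[OF assms(1)]) (auto simp: zero)
  ultimately show ?thesis using u convex_hull_finite[OF fW] by auto
qed

lemma hull_val:
  assumes "finite V" "a \<in> convex hull {v\<in>V. g \<bullet> v = m}"
  shows "g \<bullet> a = m"
proof -
  let ?W = "{v\<in>V. g \<bullet> v = m}"
  have fW: "finite ?W" using assms(1) by simp
  obtain u where u: "\<forall>x\<in>?W. 0 \<le> u x" "sum u ?W = 1" "(\<Sum>x\<in>?W. u x *\<^sub>R x) = a"
    using assms(2) convex_hull_finite[OF fW] by blast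
  have "g \<bullet> a = (\<Sum>x\<in>?W. u x * (g \<bullet> x))" unfolding u(3)[symmetric] by (simp add: inner_sum_right)
  also have "\<dots> = (\<Sum>x\<in>?W. u x * m)" by (rule sum.cong) auto
  also have "\<dots> = m" using u(2) by (simp add: sum_distrib_right[symmetric])
  finally show ?thesis .
qed

lemma cone_eq:
  assumes "finite R" "\<forall>r\<in>R. g \<bullet> r \<ge> 0" "c \<in> cone_R R" "g \<bullet> c = 0"
  shows "c \<in> cone_R {r\<in>R. g \<bullet> r = 0}"
proof -
  obtain d where d: "\<forall>t\<in>R. d t \<ge> 0" "c = (\<Sum>t\<in>R. d t *\<^sub>R t)" using assms(3) cone_R_fin[OF assms(1)] by blast
  have "(\<Sum>t\<in>R. d t * (g \<bullet> t)) = 0" using assms(4) unfolding d(2) by (simp add: inner_sum_right)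
  moreover have "\<forall>t\<in>R. d t * (g \<bullet> t) \<ge> 0" using d(1) assms(2) by auto
  ultimately have z: "\<forall>t\<in>R. d t * (g \<bullet> t) = 0"
    using sum_nonneg_eq_0_iff[OF assms(1), of "\<lambda>t. d t * (g \<bullet> t)"] by blast
  let ?R = "{r\<in>R. g \<bullet> r = 0}"
  have zero: "d t *\<^sub>R t = 0" if "t \<in> R" "t \<notin> ?R" for t using z that by auto
  have "c = (\<Sum>t\<in>?R. d t *\<^sub>R t)" unfolding d(2)
    by (rule sum.mono_neutral_right[OF assms(1)]) (auto simp: zero)
  then show ?thesis unfolding cone_R_def using assms(1) d(1) by (intro CollectI exI[of _ ?R] exI[of _ d]) auto
qed

lemma cone_val: assumes "c \<in> cone_R {r\<in>R. g \<bullet> r = 0}" shows "g \<bullet> c = 0"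
proof -
  obtain T d where T: "finite T" "T \<subseteq> {r\<in>R. g \<bullet> r = 0}" "c = (\<Sum>t\<in>T. d t *\<^sub>R t)"
    using assms unfolding cone_R_def by blast
  have "g \<bullet> c = (\<Sum>t\<in>T. d t * (g \<bullet> t))" unfolding T(3) by (simp add: inner_sum_right)
  also have "\<dots> = 0" using T(2) by (intro sum.neutral) auto
  finally show ?thesis .
qed

lemma face_eq:
  assumes fV: "finite V" and fR: "finite R" and gR: "\<forall>r\<in>R. g \<bullet> r \<ge> 0" and gV: "\<forall>v\<in>V. g \<bullet> v \<le> m"
  shows "\<forall>p\<in>set_minus (convex hull V) (cone_R R). g \<bullet> p \<le> m"
    and "{p\<in>set_minus (convex hull V) (cone_R R). g \<bullet> p = m}
         = set_minus (convex hull {v\<in>V. g \<bullet> v = m}) (cone_R {r\<in>R. g \<bullet> r = 0})"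
proof -
  show "\<forall>p\<in>set_minus (convex hull V) (cone_R R). g \<bullet> p \<le> m"
  proof
    fix p assume "p \<in> set_minus (convex hull V) (cone_R R)"
    then obtain a c where "p = a - c" "a \<in> convex hull V" "c \<in> cone_R R" unfolding set_minus_def by blast
    then show "g \<bullet> p \<le> m" using hull_le[OF fV gV] cone_R_nonneg[OF fR gR] by (fastforce simp: inner_diff_right)
  qed
  show "{p\<in>set_minus (convex hull V) (cone_R R). g \<bullet> p = m}
         = set_minus (convex hull {v\<in>V. g \<bullet> v = m}) (cone_R {r\<in>R. g \<bullet> r = 0})"
  proof (rule set_eqI, rule iffI)
    fix p assume "p \<in> {p\<in>set_minus (convex hull V) (cone_R R). g \<bullet> p = m}"
    then obtain a c where ac: "p = a - c" "a \<in> convex hull V" "c \<in> cone_R R" "g \<bullet> (a - c) = m"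
      unfolding set_minus_def by blast
    have "g \<bullet> a \<le> m" using hull_le[OF fV gV ac(2)] .
    moreover have "g \<bullet> c \<ge> 0" using cone_R_nonneg[OF fR gR ac(3)] .
    ultimately have "g \<bullet> a = m" "g \<bullet> c = 0" using ac(4) by (auto simp: inner_diff_right)
    then show "p \<in> set_minus (convex hull {v\<in>V. g \<bullet> v = m}) (cone_R {r\<in>R. g \<bullet> r = 0})"
      using hull_eq[OF fV gV ac(2)] cone_eq[OF fR gR ac(3)] ac(1) unfolding set_minus_def by blast
  next
    fix p assume "p \<in> set_minus (convex hull {v\<in>V. g \<bullet> v = m}) (cone_R {r\<in>R. g \<bullet> r = 0})"
    then obtain a c where ac: "p = a - c" "a \<in> convex hull {v\<in>V. g \<bullet> v = m}" "c \<in> cone_R {r\<in>R. g \<bullet> r = 0}"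
      unfolding set_minus_def by blast
    have "a \<in> convex hull V" using ac(2) hull_mono[of "{v\<in>V. g \<bullet> v = m}" V] by blast
    moreover have "c \<in> cone_R R" using ac(3) cone_R_mono[of "{r\<in>R. g \<bullet> r = 0}" R] by blast
    ultimately have "p \<in> set_minus (convex hull V) (cone_R R)" using ac(1) unfolding set_minus_def by blast
    moreover have "g \<bullet> p = m" using ac hull_val[OF fV ac(2)] cone_val[OF ac(3)] by (simp add: inner_diff_right)
    ultimately show "p \<in> {p\<in>set_minus (convex hull V) (cone_R R). g \<bullet> p = m}" by blast
  qed
qed




context RS begin

lemma dual: "\<exists>g. \<forall>i\<in>I. g \<bullet> s i = h i"
proof -
  define \<phi> where "\<phi> x = (\<Sum>k\<in>I. coef x k * h k)" for x
  define g where "g = (\<Sum>b\<in>Basis. \<phi> b *\<^sub>R b)"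
  have gy: "g \<bullet> y = \<phi> y" for y
  proof -
    have "g \<bullet> y = (\<Sum>b\<in>Basis. \<phi> b * (y \<bullet> b))" unfolding g_def inner_sum_left inner_scaleR_left
      by (rule sum.cong) (auto simp: inner_commute)
    also have "\<dots> = (\<Sum>b\<in>Basis. \<Sum>k\<in>I. (y \<bullet> b) * coef b k * h k)" unfolding \<phi>_def
      by (simp add: sum_distrib_left sum_distrib_right mult.commute mult.left_commute)
    also have "\<dots> = (\<Sum>k\<in>I. \<Sum>b\<in>Basis. (y \<bullet> b) * coef b k * h k)" by (rule sum.swap)
    also have "\<dots> = (\<Sum>k\<in>I. coef (\<Sum>b\<in>Basis. (y \<bullet> b) *\<^sub>R b) k * h k)"
      by (rule sum.cong) (auto simp: coef_sum coef_scale sum_distrib_right)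
    also have "\<dots> = \<phi> y" unfolding \<phi>_def euclidean_representation ..
    finally show ?thesis .
  qed
  have "g \<bullet> s i = h i" if i: "i \<in> I" for i
  proof -
    have "\<phi> (s i) = (\<Sum>k\<in>I. (if k = i then h i else 0))" unfolding \<phi>_def
      by (rule sum.cong) (auto simp: coef_s i)
    also have "\<dots> = h i" using i finI by simp
    finally show ?thesis using gy by simp
  qed
  then show ?thesis by blast
qed

lemma Q_mono: "K \<subseteq> L \<Longrightarrow> Q K \<subseteq> Q L"
  unfolding Q_def by auto

lemma Q_inter: "x \<in> Q K \<Longrightarrow> x \<in> Q L \<Longrightarrow> x \<in> Q (K \<inter> L)"
  unfolding Q_def by auto

lemma Q_inner_zero2:
  assumes "x \<in> Q L" "\<forall>k\<in>L. g \<bullet> s k = 0" shows "g \<bullet> x = 0"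
proof -
  have e: "g \<bullet> x = (\<Sum>i\<in>I. coef x i * (g \<bullet> s i))" by (rule inner_coef)
  show ?thesis unfolding e
  proof (rule sum.neutral, rule ballI)
    fix i assume i: "i \<in> I"
    show "coef x i * (g \<bullet> s i) = 0"
    proof (cases "i \<in> L")
      case True then show ?thesis using assms(2) by simp
    next
      case False then have "coef x i = 0" using assms(1) i unfolding Q_def by blast
      then show ?thesis by simp
    qed
  qed
qed

definition Rs :: "'i set \<Rightarrow> 'i set \<Rightarrow> 'a set" where "Rs A B = \<Phi> \<inter> Q A - \<Phi> \<inter> Q B"

lemma Rs_fin: "finite (Rs A B)" unfolding Rs_def using finPhi by auto

lemma R_perm_sub:
  assumes J: "J \<subseteq> I" and u: "u \<in> weyl_group s J" and b: "\<beta> \<in> Rs I J"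
  shows "u \<beta> \<in> Rs I J"
proof -
  have bP: "\<beta> \<in> \<Phi>" "pos \<beta>" "\<beta> \<notin> Q J" using b unfolding Rs_def Q_def by auto
  then obtain i where i: "i \<in> I - J" "coef \<beta> i \<noteq> 0" unfolding Q_def by blast
  then have ci: "coef \<beta> i > 0" using bP(2) unfolding pos_def by force
  have cu: "coef (u \<beta>) i = coef \<beta> i" using weyl_coef_out[OF J u i(1)] .
  have uP: "u \<beta> \<in> \<Phi>" using weyl_Phi[OF J u bP(1)] .
  have "\<not> pos (- u \<beta>)"
  proof
    assume "pos (- u \<beta>)"
    then have "coef (- u \<beta>) i \<ge> 0" using i unfolding pos_def by blast
    then show False using ci cu i coef_minus[of i "u \<beta>"] by simp
  qed
  then have "pos (u \<beta>)" using root_pos_or_neg[OF uP] by blast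
  moreover have "coef (u \<beta>) i \<noteq> 0" using ci cu by simp
  then have "u \<beta> \<notin> Q J" using i unfolding Q_def by blast
  ultimately show ?thesis using uP unfolding Rs_def Q_def by auto
qed

lemma perm_gen:
  assumes J: "J \<subseteq> I" and sub: "\<And>u. u \<in> weyl_group s J \<Longrightarrow> u ` X \<subseteq> X" and u: "u \<in> weyl_group s J"
  shows "u ` X = X"
proof -
  obtain u' where u': "u' \<in> weyl_group s J" "u' \<circ> u = id" "u \<circ> u' = id" using weyl_inv[OF J u] by blast
  have "X = u ` (u' ` X)" using u'(3) by (simp add: image_comp)
  also have "\<dots> \<subseteq> u ` X" using sub[OF u'(1)] by auto
  finally show ?thesis using sub[OF u] by auto
qed

lemma R_perm: assumes J: "J \<subseteq> I" and u: "u \<in> weyl_group s J" shows "u ` Rs I J = Rs I J"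
proof (rule perm_gen[OF J _ u])
  fix v assume "v \<in> weyl_group s J"
  then show "v ` Rs I J \<subseteq> Rs I J" using R_perm_sub[OF J] by blast
qed

lemma orbit_perm: assumes J: "J \<subseteq> I" and u: "u \<in> weyl_group s J"
  shows "u ` weyl_orbit s J x = weyl_orbit s J x"
proof (rule perm_gen[OF J _ u])
  fix v assume v: "v \<in> weyl_group s J"
  show "v ` weyl_orbit s J x \<subseteq> weyl_orbit s J x"
  proof
    fix y assume "y \<in> v ` weyl_orbit s J x"
    then obtain w where w: "w \<in> weyl_group s J" "y = v (w x)" unfolding weyl_orbit_def by blast
    then have "y = (v \<circ> w) x" by simp
    then show "y \<in> weyl_orbit s J x" using weyl_comp[OF v w(1)] unfolding weyl_orbit_def by blast
  qed
qed

lemma orbit_fin: "J \<subseteq> I \<Longrightarrow> finite (weyl_orbit s J x)"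
  unfolding weyl_orbit_def using weyl_finite by auto

lemma cone_perm:
  assumes J: "J \<subseteq> I" and u: "u \<in> weyl_group s J" and c: "c \<in> cone_R (Rs I J)"
  shows "u c \<in> cone_R (Rs I J)"
proof -
  let ?R = "Rs I J"
  obtain d where d: "\<forall>t\<in>?R. d t \<ge> 0" "c = (\<Sum>t\<in>?R. d t *\<^sub>R t)" using c cone_R_fin[OF Rs_fin] by blast
  obtain u' where u': "u' \<in> weyl_group s J" "u' \<circ> u = id" "u \<circ> u' = id" using weyl_inv[OF J u] by blast
  have inj: "inj_on u ?R" by (rule inj_on_inverseI[of _ u']) (use u'(2) in \<open>simp add: fun_eq_iff\<close>)
  have "u c = (\<Sum>t\<in>?R. d t *\<^sub>R u t)" unfolding d(2) using weyl_linear[OF u]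
    by (simp add: linear_sum linear_scale)
  also have "\<dots> = (\<Sum>r\<in>u ` ?R. d (u' r) *\<^sub>R r)"
    using sum.reindex[OF inj, of "\<lambda>r. d (u' r) *\<^sub>R r"] u'(2) by (simp add: fun_eq_iff)
  also have "\<dots> = (\<Sum>r\<in>?R. d (u' r) *\<^sub>R r)" using R_perm[OF J u] by simp
  finally show ?thesis using cone_R_fin[OF Rs_fin] d(1) R_perm_sub[OF J u'(1)]
    by (auto intro!: exI[of _ "\<lambda>r. d (u' r)"])
qed

definition PP :: "'i set \<Rightarrow> 'a \<Rightarrow> 'a set" where
  "PP J x = set_minus (convex hull (weyl_orbit s J x)) (cone_R (Rs I J))"

lemma P_perm_sub:
  assumes J: "J \<subseteq> I" and u: "u \<in> weyl_group s J"
  shows "u ` PP J x \<subseteq> PP J x"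
proof
  fix y assume "y \<in> u ` PP J x"
  then obtain a c where ac: "y = u (a - c)" "a \<in> convex hull (weyl_orbit s J x)" "c \<in> cone_R (Rs I J)"
    unfolding PP_def set_minus_def by blast
  have lin: "linear u" by (rule weyl_linear[OF u])
  have "u a \<in> u ` (convex hull (weyl_orbit s J x))" using ac(2) by blast
  then have "u a \<in> convex hull (weyl_orbit s J x)"
    using convex_hull_linear_image[OF lin] orbit_perm[OF J u] by metis
  moreover have "u c \<in> cone_R (Rs I J)" by (rule cone_perm[OF J u ac(3)])
  moreover have "y = u a - u c" using ac(1) lin by (simp add: linear_diff)
  ultimately show "y \<in> PP J x" unfolding PP_def set_minus_def by blast
qed

lemma P_perm: assumes J: "J \<subseteq> I" and u: "u \<in> weyl_group s J" shows "u ` PP J x = PP J x"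
proof (rule perm_gen[OF J _ u])
  fix v assume "v \<in> weyl_group s J"
  then show "v ` PP J x \<subseteq> PP J x" by (rule P_perm_sub[OF J])
qed

lemma dominant:
  assumes J: "J \<subseteq> I"
  shows "\<exists>u\<in>weyl_group s J. \<forall>j\<in>J. u f \<bullet> s j \<ge> 0"
proof -
  obtain \<delta> where \<delta>: "\<forall>i\<in>I. \<delta> \<bullet> s i = 1" using dual[of "\<lambda>_. 1"] by blast
  let ?W = "weyl_group s J"
  let ?h = "\<lambda>u. u f \<bullet> \<delta>"
  have fin: "finite (?h ` ?W)" using weyl_finite[OF J] by simp
  have ne: "?h ` ?W \<noteq> {}" using weyl_id[of s J] by blast
  obtain u where u: "u \<in> ?W" "?h u = Max (?h ` ?W)" using Max_in[OF fin ne] by auto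
  have "u f \<bullet> s j \<ge> 0" if j: "j \<in> J" for j
  proof (rule ccontr)
    assume "\<not> u f \<bullet> s j \<ge> 0"
    then have neg: "coroot_eval (u f) (s j) < 0" using coroot_sign_lt[of j "u f"] J j by auto
    have u2: "refl (s j) \<circ> u \<in> ?W" using weyl_step[OF u(1) j] .
    have "?h (refl (s j) \<circ> u) = ?h u - coroot_eval (u f) (s j) * (s j \<bullet> \<delta>)"
      by (simp add: refl_eq inner_diff_left)
    also have "s j \<bullet> \<delta> = 1" using \<delta> j J by (auto simp: inner_commute)
    finally have "?h (refl (s j) \<circ> u) > ?h u" using neg by simp
    moreover have "?h (refl (s j) \<circ> u) \<le> Max (?h ` ?W)" using Max_ge[OF fin] u2 by blast
    ultimately show False using u(2) by simp
  qed
  then show ?thesis using u(1) by blast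
qed

lemma core:
  assumes J: "J \<subseteq> I" and dom: "\<forall>j\<in>J. coroot_eval lam (s j) \<ge> 0"
    and gd: "\<forall>i\<in>I. g \<bullet> s i \<ge> 0"
  shows "\<forall>q\<in>PP J lam. g \<bullet> q \<le> g \<bullet> lam"
    and "{q\<in>PP J lam. g \<bullet> q = g \<bullet> lam} =
         set_minus (convex hull (weyl_orbit s (J \<inter> {i\<in>I. g \<bullet> s i = 0}) lam))
           (cone_R (Rs {i\<in>I. g \<bullet> s i = 0} (J \<inter> {i\<in>I. g \<bullet> s i = 0})))"
proof -
  let ?I0 = "{i\<in>I. g \<bullet> s i = 0}"
  let ?V = "weyl_orbit s J lam"
  let ?R = "Rs I J"
  have gJ: "\<forall>k\<in>J. g \<bullet> s k \<ge> 0" using gd J by auto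
  have gR: "\<forall>r\<in>?R. g \<bullet> r \<ge> 0" using Q_inner_nonneg[of _ I g] gd unfolding Rs_def by auto
  have gV: "\<forall>v\<in>?V. g \<bullet> v \<le> g \<bullet> lam"
  proof
    fix v assume "v \<in> ?V"
    then obtain u where u: "u \<in> weyl_group s J" "v = u lam" unfolding weyl_orbit_def by blast
    have "g \<bullet> (lam - u lam) \<ge> 0" using Q_inner_nonneg[OF H1[OF J dom u(1)] gJ] .
    then show "g \<bullet> v \<le> g \<bullet> lam" using u(2) by (simp add: inner_diff_right)
  qed
  note fe = face_eq[OF orbit_fin[OF J] Rs_fin gR gV]
  show "\<forall>q\<in>PP J lam. g \<bullet> q \<le> g \<bullet> lam" using fe(1) unfolding PP_def .
  have JI0: "{k\<in>J. g \<bullet> s k = 0} = J \<inter> ?I0" using J by auto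
  have Veq: "{v\<in>?V. g \<bullet> v = g \<bullet> lam} = weyl_orbit s (J \<inter> ?I0) lam"
  proof (rule set_eqI, rule iffI)
    fix v assume v: "v \<in> {v\<in>?V. g \<bullet> v = g \<bullet> lam}"
    then obtain u where u: "u \<in> weyl_group s J" "v = u lam" unfolding weyl_orbit_def by blast
    have "g \<bullet> (lam - u lam) = 0" using v u(2) by (simp add: inner_diff_right)
    then show "v \<in> weyl_orbit s (J \<inter> ?I0) lam" using H2[OF J dom gJ u(1)] u(2) JI0 by simp
  next
    fix v assume "v \<in> weyl_orbit s (J \<inter> ?I0) lam"
    then obtain u where u: "u \<in> weyl_group s (J \<inter> ?I0)" "v = u lam" unfolding weyl_orbit_def by blast
    have uJ: "u \<in> weyl_group s J" using weyl_mono[OF _ u(1)] by blast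
    have "lam - u lam \<in> Q (J \<inter> ?I0)" using H1[OF _ _ u(1)] J dom by auto
    then have "g \<bullet> (lam - u lam) = 0" by (rule Q_inner_zero2) auto
    then show "v \<in> {v\<in>?V. g \<bullet> v = g \<bullet> lam}" using u(2) uJ unfolding weyl_orbit_def
      by (auto simp: inner_diff_right)
  qed
  have Req: "{r\<in>?R. g \<bullet> r = 0} = Rs ?I0 (J \<inter> ?I0)"
  proof (rule set_eqI, rule iffI)
    fix r assume r: "r \<in> {r\<in>?R. g \<bullet> r = 0}"
    then have rP: "r \<in> \<Phi>" "r \<in> Q I" "r \<notin> Q J" "g \<bullet> r = 0" unfolding Rs_def by auto
    have "r \<in> Q ?I0" using Q_inner_zero[OF rP(2) _ rP(4)] gd by simp
    moreover have "r \<notin> Q (J \<inter> ?I0)" using rP(3) Q_mono[of "J \<inter> ?I0" J] by blast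
    ultimately show "r \<in> Rs ?I0 (J \<inter> ?I0)" using rP unfolding Rs_def by blast
  next
    fix r assume r: "r \<in> Rs ?I0 (J \<inter> ?I0)"
    then have rP: "r \<in> \<Phi>" "r \<in> Q ?I0" "r \<notin> Q (J \<inter> ?I0)" unfolding Rs_def by auto
    have "r \<in> Q I" using rP(2) Q_mono[of ?I0 I] by blast
    moreover have "r \<notin> Q J" using rP(2,3) Q_inter[of r J ?I0] by blast
    moreover have "g \<bullet> r = 0" using rP(2) by (rule Q_inner_zero2) auto
    ultimately show "r \<in> {r\<in>?R. g \<bullet> r = 0}" using rP unfolding Rs_def by blast
  qed
  show "{q\<in>PP J lam. g \<bullet> q = g \<bullet> lam} =
         set_minus (convex hull (weyl_orbit s (J \<inter> ?I0) lam)) (cone_R (Rs ?I0 (J \<inter> ?I0)))"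
    using fe(2) unfolding PP_def Veq Req .
qed

end



theorem mainTheorem6:
  fixes \<Phi> :: "'a::euclidean_space set" and I J :: "'i set" and s :: "'i \<Rightarrow> 'a"
    and lam lam' :: 'a and F :: "'a set"
  assumes "root_system \<Phi>"
    and "simple_roots \<Phi> I s"
    and "J \<subseteq> I"
    and "lam' \<in> weyl_orbit s J lam"
    and "\<forall>j\<in>J. coroot_eval lam' (s j) \<ge> 0"
  shows "is_face F (polyP \<Phi> I s lam J) \<longleftrightarrow>
    (\<exists>w\<in>weyl_group s J. \<exists>I0\<subseteq>I.
       w ` F = set_minus (convex hull (weyl_orbit s (J \<inter> I0) lam'))
                 (cone_R (pos_roots \<Phi> I s I0 - pos_roots \<Phi> I s (J \<inter> I0))))"
proof -
  interpret RS \<Phi> I s using assms(1,2) by unfold_locales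
  have J: "J \<subseteq> I" by (rule assms(3))
  have dom: "\<forall>j\<in>J. coroot_eval lam' (s j) \<ge> 0" by (rule assms(5))
  obtain x where x: "x \<in> weyl_group s J" "lam' = x lam" using assms(4) unfolding weyl_orbit_def by blast
  obtain x' where x': "x' \<in> weyl_group s J" "x' \<circ> x = id" "x \<circ> x' = id" using weyl_inv[OF J x(1)] by blast
  have orb: "weyl_orbit s J lam = weyl_orbit s J lam'"
  proof (rule set_eqI, rule iffI)
    fix y assume "y \<in> weyl_orbit s J lam"
    then obtain u where u: "u \<in> weyl_group s J" "y = u lam" unfolding weyl_orbit_def by blast
    have "lam = x' lam'" using x(2) x'(2) by (simp add: fun_eq_iff)
    then have "y = (u \<circ> x') lam'" using u by simp
    then show "y \<in> weyl_orbit s J lam'" using weyl_comp[OF u(1) x'(1)] unfolding weyl_orbit_def by blast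
  next
    fix y assume "y \<in> weyl_orbit s J lam'"
    then obtain u where u: "u \<in> weyl_group s J" "y = u lam'" unfolding weyl_orbit_def by blast
    then have "y = (u \<circ> x) lam" using x(2) by simp
    then show "y \<in> weyl_orbit s J lam" using weyl_comp[OF u(1) x(1)] unfolding weyl_orbit_def by blast
  qed
  have PPeq: "polyP \<Phi> I s lam J = PP J lam'"
    unfolding polyP_def PP_def Rs_def pos_roots_eq orb ..
  have RHSeq: "\<And>I0. set_minus (convex hull (weyl_orbit s (J \<inter> I0) lam'))
                 (cone_R (pos_roots \<Phi> I s I0 - pos_roots \<Phi> I s (J \<inter> I0)))
             = set_minus (convex hull (weyl_orbit s (J \<inter> I0) lam')) (cone_R (Rs I0 (J \<inter> I0)))"
    unfolding Rs_def pos_roots_eq ..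
  let ?P = "PP J lam'"
  have lamP: "lam' \<in> ?P"
  proof -
    have "lam' = (\<lambda>w. w lam') id" by simp
    then have "lam' \<in> weyl_orbit s J lam'" using weyl_id[of s J] unfolding weyl_orbit_def by (rule image_eqI)
    then have "lam' \<in> convex hull (weyl_orbit s J lam')" by (rule hull_inc)
    then show ?thesis unfolding PP_def set_minus_def using cone_R_zero by force
  qed
  have inn: "\<And>u a b. u \<in> weyl_group s J \<Longrightarrow> u a \<bullet> u b = a \<bullet> b" using weyl_inner[OF J] by blast
  show ?thesis unfolding PPeq RHSeq
  proof
    assume face: "is_face F ?P"
    show "\<exists>w\<in>weyl_group s J. \<exists>I0\<subseteq>I. w ` F = set_minus (convex hull (weyl_orbit s (J \<inter> I0) lam')) (cone_R (Rs I0 (J \<inter> I0)))"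
    proof (cases "F = ?P")
      case True
      have "id ` F = set_minus (convex hull (weyl_orbit s (J \<inter> I) lam')) (cone_R (Rs I (J \<inter> I)))"
        using True J unfolding PP_def by (simp add: Int_absorb2)
      then show ?thesis using weyl_id[of s J] by blast
    next
      case False
      then obtain v w0 where vw: "F = ?P \<inter> hyperplane v w0" "?P \<subseteq> {u. v \<bullet> (u - w0) \<ge> 0}"
        "?P \<inter> hyperplane v w0 \<noteq> {}" using face unfolding is_face_def by blast
      define f where "f = - v"
      have Fd: "F = {p\<in>?P. f \<bullet> p = f \<bullet> w0}" unfolding vw(1) hyperplane_def f_def
        by (auto simp: inner_diff_right)
      have bnd: "\<forall>p\<in>?P. f \<bullet> p \<le> f \<bullet> w0" using vw(2) unfolding f_def by (auto simp: inner_diff_right)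
      obtain p0 where p0: "p0 \<in> F" using vw(1,3) by blast
      have p0P: "p0 \<in> ?P" and fp0: "f \<bullet> p0 = f \<bullet> w0" using p0 Fd by auto
      have fR: "\<forall>r\<in>Rs I J. f \<bullet> r \<ge> 0"
      proof (rule ballI, rule ccontr)
        fix r assume r: "r \<in> Rs I J" and "\<not> f \<bullet> r \<ge> 0"
        then have neg: "f \<bullet> r < 0" by simp
        obtain a c where ac: "p0 = a - c" "a \<in> convex hull (weyl_orbit s J lam')" "c \<in> cone_R (Rs I J)"
          using p0P unfolding PP_def set_minus_def by blast
        define t where "t = 1 / (- (f \<bullet> r))"
        have t: "t \<ge> 0" using neg by (simp add: t_def)
        have "a - (c + t *\<^sub>R r) \<in> ?P" using cone_R_add[OF Rs_fin ac(3) r t] ac(2)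
          unfolding PP_def set_minus_def by blast
        then have "f \<bullet> (a - (c + t *\<^sub>R r)) \<le> f \<bullet> w0" using bnd by blast
        moreover have "f \<bullet> (a - (c + t *\<^sub>R r)) = f \<bullet> p0 - t * (f \<bullet> r)"
          using ac(1) by (simp add: inner_diff_right inner_add_right)
        moreover have "t * (f \<bullet> r) = -1" using neg by (simp add: t_def)
        ultimately show False using fp0 by simp
      qed
      obtain u where u: "u \<in> weyl_group s J" "\<forall>j\<in>J. u f \<bullet> s j \<ge> 0" using dominant[OF J] by blast
      obtain u' where u': "u' \<in> weyl_group s J" "u' \<circ> u = id" "u \<circ> u' = id" using weyl_inv[OF J u(1)] by blast
      define g where "g = u f"
      have uu': "\<And>y. u (u' y) = y" using u'(3) by (simp add: fun_eq_iff)
      have u'u: "\<And>y. u' (u y) = y" using u'(2) by (simp add: fun_eq_iff)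
      have gd: "\<forall>i\<in>I. g \<bullet> s i \<ge> 0"
      proof
        fix i assume i: "i \<in> I"
        show "g \<bullet> s i \<ge> 0"
        proof (cases "i \<in> J")
          case True then show ?thesis using u(2) by (simp add: g_def)
        next
          case False
          have "s i \<in> Rs I J"
          proof -
            have "s i \<in> Q I" using pos_s[OF i] unfolding Q_def by auto
            moreover have "s i \<notin> Q J"
            proof
              assume "s i \<in> Q J"
              then have "coef (s i) i = 0" using False i unfolding Q_def by blast
              then show False using coef_s[OF i i] by simp
            qed
            ultimately show ?thesis using s_in[OF i] unfolding Rs_def by auto
          qed
          then have "u' (s i) \<in> Rs I J" by (rule R_perm_sub[OF J u'(1)])
          then have "f \<bullet> u' (s i) \<ge> 0" using fR by blast
          moreover have "g \<bullet> s i = f \<bullet> u' (s i)" unfolding g_def using inn[OF u(1), of f "u' (s i)"] uu' by simp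
          ultimately show ?thesis by simp
        qed
      qed
      note c = core[OF J dom gd]
      have Pu: "u ` ?P = ?P" and Pu': "u' ` ?P = ?P" using P_perm[OF J u(1)] P_perm[OF J u'(1)] by auto
      have uF: "u ` F = {q\<in>?P. g \<bullet> q = f \<bullet> w0}"
      proof (rule set_eqI, rule iffI)
        fix q assume "q \<in> u ` F"
        then obtain p where p: "p \<in> F" "q = u p" by blast
        then have "q \<in> ?P" using Fd Pu by auto
        moreover have "g \<bullet> q = f \<bullet> p" unfolding g_def p(2) by (rule inn[OF u(1)])
        ultimately show "q \<in> {q\<in>?P. g \<bullet> q = f \<bullet> w0}" using p(1) Fd by auto
      next
        fix q assume q: "q \<in> {q\<in>?P. g \<bullet> q = f \<bullet> w0}"
        then have "u' q \<in> ?P" using Pu' by auto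
        moreover have "f \<bullet> u' q = g \<bullet> q" unfolding g_def using inn[OF u(1), of f "u' q"] uu' by simp
        ultimately have "u' q \<in> F" using q Fd by auto
        then have "u (u' q) \<in> u ` F" by (rule imageI)
        then show "q \<in> u ` F" using uu'[of q] by simp
      qed
      have m: "f \<bullet> w0 = g \<bullet> lam'"
      proof (rule order.antisym)
        have "u' lam' \<in> ?P" using lamP Pu' by auto
        then have "f \<bullet> u' lam' \<le> f \<bullet> w0" using bnd by blast
        moreover have "f \<bullet> u' lam' = g \<bullet> lam'" unfolding g_def using inn[OF u(1), of f "u' lam'"] uu' by simp
        ultimately show "g \<bullet> lam' \<le> f \<bullet> w0" by simp
        have "u p0 \<in> ?P" using p0P Pu by auto
        then have "g \<bullet> u p0 \<le> g \<bullet> lam'" using c(1) by blast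
        moreover have "g \<bullet> u p0 = f \<bullet> p0" unfolding g_def by (rule inn[OF u(1)])
        ultimately show "f \<bullet> w0 \<le> g \<bullet> lam'" using fp0 by simp
      qed
      have "u ` F = set_minus (convex hull (weyl_orbit s (J \<inter> {i\<in>I. g \<bullet> s i = 0}) lam'))
           (cone_R (Rs {i\<in>I. g \<bullet> s i = 0} (J \<inter> {i\<in>I. g \<bullet> s i = 0})))"
        unfolding uF m using c(2) .
      then show ?thesis using u(1) by (intro bexI[of _ u] exI[of _ "{i\<in>I. g \<bullet> s i = 0}"]) auto
    qed
  next
    assume "\<exists>w\<in>weyl_group s J. \<exists>I0\<subseteq>I. w ` F = set_minus (convex hull (weyl_orbit s (J \<inter> I0) lam')) (cone_R (Rs I0 (J \<inter> I0)))"
    then obtain w I0 where w: "w \<in> weyl_group s J" "I0 \<subseteq> I"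
      "w ` F = set_minus (convex hull (weyl_orbit s (J \<inter> I0) lam')) (cone_R (Rs I0 (J \<inter> I0)))" by blast
    obtain g where g: "\<forall>i\<in>I. g \<bullet> s i = (if i \<in> I0 then 0 else 1)" using dual[of "\<lambda>i. if i \<in> I0 then 0 else 1"] by blast
    have gd: "\<forall>i\<in>I. g \<bullet> s i \<ge> 0"
    proof
      fix i assume "i \<in> I" then show "g \<bullet> s i \<ge> 0" using g by simp
    qed
    have I0eq: "{i\<in>I. g \<bullet> s i = 0} = I0"
    proof (rule set_eqI)
      fix i show "i \<in> {i\<in>I. g \<bullet> s i = 0} \<longleftrightarrow> i \<in> I0"
      proof (cases "i \<in> I")
        case True then show ?thesis using g by simp
      next
        case False then show ?thesis using w(2) by blast
      qed
    qed
    note c = core[OF J dom gd, unfolded I0eq]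
    have wF: "w ` F = {q\<in>?P. g \<bullet> q = g \<bullet> lam'}" unfolding w(3) by (rule c(2)[symmetric])
    obtain w' where w': "w' \<in> weyl_group s J" "w' \<circ> w = id" "w \<circ> w' = id" using weyl_inv[OF J w(1)] by blast
    have ww': "\<And>y. w (w' y) = y" using w'(3) by (simp add: fun_eq_iff)
    have w'w: "\<And>y. w' (w y) = y" using w'(2) by (simp add: fun_eq_iff)
    have Pw: "w ` ?P = ?P" and Pw': "w' ` ?P = ?P" using P_perm[OF J w(1)] P_perm[OF J w'(1)] by auto
    define f where "f = w' g"
    have fx: "f \<bullet> y = g \<bullet> w y" for y
    proof -
      have "f \<bullet> y = w' g \<bullet> w' (w y)" unfolding f_def using w'w[of y] by simp
      also have "\<dots> = g \<bullet> w y" by (rule inn[OF w'(1)])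
      finally show ?thesis .
    qed
    have Fc: "y \<in> F \<longleftrightarrow> y \<in> ?P \<and> g \<bullet> w y = g \<bullet> lam'" for y
    proof (rule iffI)
      assume yF: "y \<in> F"
      have "w y \<in> w ` F" using yF by (rule imageI)
      then have wy: "w y \<in> ?P" "g \<bullet> w y = g \<bullet> lam'" unfolding wF by simp_all
      have "w' (w y) \<in> w' ` ?P" using wy(1) by (rule imageI)
      then have "y \<in> ?P" using Pw' w'w[of y] by simp
      then show "y \<in> ?P \<and> g \<bullet> w y = g \<bullet> lam'" using wy(2) by simp
    next
      assume y: "y \<in> ?P \<and> g \<bullet> w y = g \<bullet> lam'"
      then have "w y \<in> w ` ?P" by (intro imageI) simp
      then have "w y \<in> ?P" using Pw by simp
      then have "w y \<in> w ` F" unfolding wF using y by simp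
      then obtain z where z: "z \<in> F" "w y = w z" by (rule imageE)
      have "y = w' (w y)" by (rule w'w[symmetric])
      also have "\<dots> = w' (w z)" using z(2) by (rule arg_cong)
      also have "\<dots> = z" by (rule w'w)
      finally show "y \<in> F" using z(1) by simp
    qed
    have hyp: "F = ?P \<inter> hyperplane (- f) (w' lam')"
    proof (rule set_eqI)
      fix y
      have e1: "f \<bullet> (w' lam') = g \<bullet> lam'" using fx[of "w' lam'"] ww'[of lam'] by simp
      have "(- f \<bullet> (y - w' lam') = 0) \<longleftrightarrow> (g \<bullet> w y = g \<bullet> lam')"
        using fx[of y] e1 by (auto simp: inner_diff_right)
      then show "y \<in> F \<longleftrightarrow> y \<in> ?P \<inter> hyperplane (- f) (w' lam')"
        unfolding hyperplane_def using Fc[of y] by simp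
    qed
    moreover have "?P \<subseteq> {y. - f \<bullet> (y - w' lam') \<ge> 0}"
    proof
      fix y assume "y \<in> ?P"
      then have "w y \<in> w ` ?P" by (rule imageI)
      then have "w y \<in> ?P" using Pw by simp
      then have "g \<bullet> w y \<le> g \<bullet> lam'" using c(1) by blast
      moreover have "f \<bullet> (w' lam') = g \<bullet> lam'" using fx[of "w' lam'"] ww'[of lam'] by simp
      ultimately show "y \<in> {y. - f \<bullet> (y - w' lam') \<ge> 0}" using fx[of y] by (simp add: inner_diff_right)
    qed
    moreover have "w' lam' \<in> F"
    proof -
      have "w' lam' \<in> w' ` ?P" using lamP by (rule imageI)
      then have "w' lam' \<in> ?P" using Pw' by simp
      then show ?thesis using Fc[of "w' lam'"] ww'[of lam'] by simp
    qed
    ultimately have "F = ?P \<inter> hyperplane (- f) (w' lam') \<and> ?P \<subseteq> {y. - f \<bullet> (y - w' lam') \<ge> 0}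
        \<and> ?P \<inter> hyperplane (- f) (w' lam') \<noteq> {}" by auto
    then have "\<exists>v w0. F = ?P \<inter> hyperplane v w0 \<and> ?P \<subseteq> {y. v \<bullet> (y - w0) \<ge> 0}
        \<and> ?P \<inter> hyperplane v w0 \<noteq> {}" by (intro exI)
    then show "is_face F ?P" unfolding is_face_def by (rule disjI2)
  qed
qed


end
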